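(* For each $n$ let $\mathbf{v}=\mathbf{v}_n$, $\mathbf{w}=\mathbf{w}_n$, $\bar{\mathbf{v}}=\bar{\mathbf{v}}_n$ be random vectors in $\mathbb{R}^n$ with $\delta_n:=\min_{i\in[n]}|\bar v_i|>0$, and let $p=p_n\to\infty$. If $\min_{s=\pm1}\|s\mathbf{v}-\bar{\mathbf{v}}-\mathbf{w}\|_p=o_{\mathbb P}(n^{1/p}\delta_n;p)$, then $\limsup_{n\to\infty}p^{-1}\log\Big(\frac1n\mathbb{E}\min_{s=\pm1}|\{i\in[n]:s\,\mathrm{sgn}(v_i)\ne\mathrm{sgn}(\bar v_i)\}|\Big)\le\limsup_{\varepsilon\to0}\limsup_{n\to\infty}p^{-1}\log\Big(\frac1n\sum_{i=1}^n\mathbb{P}\big(-w_i\,\mathrm{sgn}(\bar v_i)\ge(1-\varepsilon)|\bar v_i|\big)\Big)$.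
   Context: $\mathrm{sgn}$ is the sign function; $\|\cdot\|_p$ is the vector $\ell_p$ norm; $\log0=-\infty$. For random $X_n,Y_n$ and deterministic $r_n>0$: $X_n=O_{\mathbb P}(Y_n;r_n)$ means there is a constant $C_1>0$ such that for every $C>0$ there exist $C'>0,N$ with $\mathbb{P}(|X_n|\ge C'|Y_n|)\le C_1e^{-Cr_n}$ for $n\ge N$; $X_n=o_{\mathbb P}(Y_n;r_n)$ means $X_n=O_{\mathbb P}(w_nY_n;r_n)$ for some deterministic $w_n\to0$. *)

theory Defs
  imports "HOL-Probability.Probability"
begin

text \<open>Vectors in R^n are represented as functions nat => real, only the
indices i < n (i.e. {..<n}) being relevant.\<close>

definition lp_norm :: "real \<Rightarrow> nat \<Rightarrow> (nat \<Rightarrow> real) \<Rightarrow> real" where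
  "lp_norm p n x = (\<Sum>i<n. \<bar>x i\<bar> powr p) powr (1 / p)"

definition eln :: "real \<Rightarrow> ereal" where
  "eln x = (if x \<le> 0 then -\<infinity> else ereal (ln x))"

definition bigO_P ::
  "(nat \<Rightarrow> 'a measure) \<Rightarrow> (nat \<Rightarrow> 'a \<Rightarrow> real) \<Rightarrow> (nat \<Rightarrow> 'a \<Rightarrow> real) \<Rightarrow> (nat \<Rightarrow> real) \<Rightarrow> bool" where
  "bigO_P M X Y r \<longleftrightarrow>
     (\<exists>C1>0. \<forall>C>0. \<exists>C'>0. \<exists>N. \<forall>n\<ge>N.
        measure (M n) {\<omega> \<in> space (M n). \<bar>X n \<omega>\<bar> \<ge> C' * \<bar>Y n \<omega>\<bar>} \<le> C1 * exp (- C * r n))"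

definition smallo_P ::
  "(nat \<Rightarrow> 'a measure) \<Rightarrow> (nat \<Rightarrow> 'a \<Rightarrow> real) \<Rightarrow> (nat \<Rightarrow> 'a \<Rightarrow> real) \<Rightarrow> (nat \<Rightarrow> real) \<Rightarrow> bool" where
  "smallo_P M X Y r \<longleftrightarrow>
     (\<exists>w::nat \<Rightarrow> real. w \<longlonglongrightarrow> 0 \<and> bigO_P M X (\<lambda>n \<omega>. w n * Y n \<omega>) r)"

definition sign_mismatch :: "nat \<Rightarrow> real \<Rightarrow> (nat \<Rightarrow> real) \<Rightarrow> (nat \<Rightarrow> real) \<Rightarrow> nat" where
  "sign_mismatch n s v vb = card {i \<in> {..<n}. s * sgn (v i) \<noteq> sgn (vb i)}"

end

theory Submission
  imports Defs
begin


lemma card_lp_bound: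
  fixes x :: "nat \<Rightarrow> real"
  assumes p: "p > 0" and a: "a > 0" and B: "lp_norm p n x < B"
  shows "real (card {i\<in>{..<n}. a \<le> \<bar>x i\<bar>}) * a powr p \<le> B powr p"
proof -
  define S where "S = (\<Sum>i<n. \<bar>x i\<bar> powr p)"
  have S0: "S \<ge> 0" unfolding S_def by (auto intro: sum_nonneg)
  have l: "lp_norm p n x = S powr (1/p)" unfolding lp_norm_def S_def by simp
  have "S = (S powr (1/p)) powr p" using S0 p by (simp add: powr_powr)
  also have "\<dots> \<le> B powr p" using B l p by (intro powr_mono2) auto
  finally have SB: "S \<le> B powr p" .
  let ?U = "{i\<in>{..<n}. a \<le> \<bar>x i\<bar>}"
  have "real (card ?U) * a powr p = (\<Sum>i\<in>?U. a powr p)" by simp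
  also have "\<dots> \<le> (\<Sum>i\<in>?U. \<bar>x i\<bar> powr p)" using a p by (intro sum_mono powr_mono2) auto
  also have "\<dots> \<le> S" unfolding S_def by (intro sum_mono2) auto
  finally show ?thesis using SB by simp
qed

lemma mismatch_cases:
  fixes v w vb s e :: real
  assumes "vb \<noteq> 0" "s = 1 \<or> s = -1" "s * sgn v \<noteq> sgn vb"
  shows "- w * sgn vb \<ge> (1 - e) * \<bar>vb\<bar> \<or> e * \<bar>vb\<bar> \<le> \<bar>s * v - vb - w\<bar>"
  using assms by (cases "vb > 0"; cases "v > 0"; cases "v < 0"; auto simp: sgn_if algebra_simps)

lemma sm_measurable[measurable]:
  assumes [measurable]: "\<And>i. (\<lambda>\<omega>. v \<omega> i) \<in> borel_measurable M" "\<And>i. (\<lambda>\<omega>. vb \<omega> i) \<in> borel_measurable M"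
  shows "(\<lambda>\<omega>. real (sign_mismatch n s (v \<omega>) (vb \<omega>))) \<in> borel_measurable M"
proof -
  have "\<And>\<omega>. real (sign_mismatch n s (v \<omega>) (vb \<omega>)) = (\<Sum>i<n. if s * sgn (v \<omega> i) \<noteq> sgn (vb \<omega> i) then 1 else 0)"
    unfolding sign_mismatch_def by (simp add: sum.If_cases Int_def)
  moreover have "(\<lambda>\<omega>. (\<Sum>i<n. if s * sgn (v \<omega> i) \<noteq> sgn (vb \<omega> i) then 1 else 0::real)) \<in> borel_measurable M"
    by measurable
  ultimately show ?thesis by simp
qed

lemma pointwise:
  fixes v w vb :: "nat \<Rightarrow> real"
  assumes n: "n \<ge> 1" and p: "p > 0" and e: "0 < e"
    and dpos: "Min ((\<lambda>i. \<bar>vb i\<bar>) ` {..<n}) > 0" and c: "c \<ge> 0"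
    and X: "min (lp_norm p n (\<lambda>i. v i - vb i - w i)) (lp_norm p n (\<lambda>i. - v i - vb i - w i))
            < c * (real n powr (1/p) * Min ((\<lambda>i. \<bar>vb i\<bar>) ` {..<n}))"
  shows "real (min (sign_mismatch n 1 v vb) (sign_mismatch n (-1) v vb))
     \<le> real (card {i\<in>{..<n}. - w i * sgn (vb i) \<ge> (1 - e) * \<bar>vb i\<bar>}) + real n * (c / e) powr p"
proof -
  define d where "d = Min ((\<lambda>i. \<bar>vb i\<bar>) ` {..<n})"
  have d0: "d > 0" using dpos d_def by simp
  have dle: "\<And>i. i < n \<Longrightarrow> d \<le> \<bar>vb i\<bar>" unfolding d_def by (intro Min_le) auto
  have ex: "\<exists>s. (s = 1 \<or> s = -1) \<and> lp_norm p n (\<lambda>i. s * v i - vb i - w i) < c * (real n powr (1/p) * d)"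
  proof (cases "lp_norm p n (\<lambda>i. v i - vb i - w i) \<le> lp_norm p n (\<lambda>i. - v i - vb i - w i)")
    case True
    then show ?thesis using X unfolding d_def[symmetric] by (intro exI[of _ 1]) (auto simp: min_def)
  next
    case False
    then show ?thesis using X unfolding d_def[symmetric] by (intro exI[of _ "-1"]) (auto simp: min_def)
  qed
  then obtain s where s: "s = 1 \<or> s = -1"
    and ls: "lp_norm p n (\<lambda>i. s * v i - vb i - w i) < c * (real n powr (1/p) * d)" by blast
  let ?A = "{i\<in>{..<n}. - w i * sgn (vb i) \<ge> (1 - e) * \<bar>vb i\<bar>}"
  let ?U = "{i\<in>{..<n}. e * d \<le> \<bar>s * v i - vb i - w i\<bar>}"
  have "real (min (sign_mismatch n 1 v vb) (sign_mismatch n (-1) v vb)) \<le> real (sign_mismatch n s v vb)"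
    using s by auto
  also have "sign_mismatch n s v vb \<le> card (?A \<union> ?U)"
    unfolding sign_mismatch_def
  proof (rule card_mono)
    show "{i \<in> {..<n}. s * sgn (v i) \<noteq> sgn (vb i)} \<subseteq> ?A \<union> ?U"
    proof
      fix i assume i: "i \<in> {i \<in> {..<n}. s * sgn (v i) \<noteq> sgn (vb i)}"
      then have "vb i \<noteq> 0" using dle[of i] d0 by auto
      from mismatch_cases[OF this s, of "v i" e "w i"] i
      have "- w i * sgn (vb i) \<ge> (1 - e) * \<bar>vb i\<bar> \<or> e * \<bar>vb i\<bar> \<le> \<bar>s * v i - vb i - w i\<bar>" by auto
      moreover have "e * d \<le> e * \<bar>vb i\<bar>" using dle[of i] i e by auto
      ultimately show "i \<in> ?A \<union> ?U" using i by auto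
    qed
  qed auto
  then have "real (sign_mismatch n s v vb) \<le> real (card ?A) + real (card ?U)"
    using card_Un_le[of ?A ?U] by linarith
  also have "real (card ?U) \<le> real n * (c / e) powr p"
  proof -
    have "real (card ?U) * (e * d) powr p \<le> (c * (real n powr (1/p) * d)) powr p"
      using card_lp_bound[OF p _ ls, of "e * d"] e d0 by simp
    also have "\<dots> = c powr p * real n * d powr p"
      using p c d0 by (simp add: powr_mult powr_powr)
    finally have "real (card ?U) * (e powr p * d powr p) \<le> (real n * (c powr p / e powr p)) * (e powr p * d powr p)"
      using e d0 by (simp add: powr_mult field_simps)
    then have "real (card ?U) \<le> real n * (c powr p / e powr p)"
      using e d0 by (simp add: pos_le_divide_eq)
    then show ?thesis using c e by (simp add: powr_divide)
  qed
  finally show ?thesis by simp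
qed

lemma eln_up:
  assumes p: "p > 0" and a: "a \<le> 3 * exp (z * p)"
  shows "ereal (1 / p) * eln a \<le> ereal (ln 3 / p + z)"
proof (cases "a \<le> 0")
  case True then show ?thesis using p by (simp add: eln_def)
next
  case False
  then have "ln a \<le> ln (3 * exp (z * p))" using a by simp
  also have "\<dots> = ln 3 + z * p" by (simp add: ln_mult)
  finally have "ln a / p \<le> ln 3 / p + z" using p by (simp add: field_simps)
  then show ?thesis using False p by (simp add: eln_def)
qed

lemma eln_down:
  assumes p: "p > 0" and b: "ereal (1 / p) * eln b < ereal z"
  shows "b < exp (z * p)"
proof (cases "b \<le> 0")
  case True then show ?thesis by (meson exp_gt_zero le_less_trans not_le)
next
  case False
  then have "ln b / p < z" using b p by (simp add: eln_def)
  then have "ln b < z * p" using p by (simp add: field_simps)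
  then show ?thesis using False by (metis exp_less_mono exp_ln not_le)
qed

lemma integral_step:
  fixes M :: "'a measure" and v w vb :: "'a \<Rightarrow> nat \<Rightarrow> real"
  assumes P: "prob_space M"
    and [measurable]: "\<And>i. (\<lambda>\<omega>. v \<omega> i) \<in> borel_measurable M"
    and [measurable]: "\<And>i. (\<lambda>\<omega>. w \<omega> i) \<in> borel_measurable M"
    and [measurable]: "\<And>i. (\<lambda>\<omega>. vb \<omega> i) \<in> borel_measurable M"
    and n: "n \<ge> 1" and p: "p > 0" and e: "0 < e" and C': "C' > 0"
    and dpos: "\<And>\<omega>. \<omega> \<in> space M \<Longrightarrow> Min ((\<lambda>i. \<bar>vb \<omega> i\<bar>) ` {..<n}) > 0"
  shows "(\<integral>\<omega>. real (min (sign_mismatch n 1 (v \<omega>) (vb \<omega>)) (sign_mismatch n (-1) (v \<omega>) (vb \<omega>))) \<partial>M)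
     \<le> (\<Sum>i<n. measure M {\<omega> \<in> space M. - w \<omega> i * sgn (vb \<omega> i) \<ge> (1 - e) * \<bar>vb \<omega> i\<bar>})
        + real n * ((C' * \<bar>q\<bar>) / e) powr p
        + real n * measure M {\<omega> \<in> space M.
             \<bar>min (lp_norm p n (\<lambda>i. v \<omega> i - vb \<omega> i - w \<omega> i))
                   (lp_norm p n (\<lambda>i. - v \<omega> i - vb \<omega> i - w \<omega> i))\<bar>
             \<ge> C' * \<bar>q * (real n powr (1 / p) * Min ((\<lambda>i. \<bar>vb \<omega> i\<bar>) ` {..<n}))\<bar>}"
proof -
  interpret prob_space M by fact
  define X where "X \<omega> = min (lp_norm p n (\<lambda>i. v \<omega> i - vb \<omega> i - w \<omega> i))
                   (lp_norm p n (\<lambda>i. - v \<omega> i - vb \<omega> i - w \<omega> i))" for \<omega>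
  define Y where "Y \<omega> = real n powr (1 / p) * Min ((\<lambda>i. \<bar>vb \<omega> i\<bar>) ` {..<n})" for \<omega>
  define K where "K \<omega> = real (min (sign_mismatch n 1 (v \<omega>) (vb \<omega>)) (sign_mismatch n (-1) (v \<omega>) (vb \<omega>)))" for \<omega>
  define A where "A i = {\<omega> \<in> space M. - w \<omega> i * sgn (vb \<omega> i) \<ge> (1 - e) * \<bar>vb \<omega> i\<bar>}" for i
  define B where "B = {\<omega> \<in> space M. \<bar>X \<omega>\<bar> \<ge> C' * \<bar>q * Y \<omega>\<bar>}"
  define c where "c = C' * \<bar>q\<bar>"
  have c0: "c \<ge> 0" using C' by (simp add: c_def)
  have Xm[measurable]: "X \<in> borel_measurable M" unfolding X_def lp_norm_def by measurable
  have Ym[measurable]: "Y \<in> borel_measurable M" unfolding Y_def by measurable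
  have Km[measurable]: "K \<in> borel_measurable M"
  proof -
    have "K = (\<lambda>\<omega>. min (real (sign_mismatch n 1 (v \<omega>) (vb \<omega>))) (real (sign_mismatch n (-1) (v \<omega>) (vb \<omega>))))"
      by (simp add: K_def fun_eq_iff of_nat_min)
    also have "\<dots> \<in> borel_measurable M" by measurable
    finally show ?thesis .
  qed
  have Am[measurable]: "A i \<in> sets M" for i unfolding A_def by measurable
  have Bm[measurable]: "B \<in> sets M" unfolding B_def by measurable
  have Kle: "K \<omega> \<le> real n" for \<omega>
  proof -
    have "sign_mismatch n 1 (v \<omega>) (vb \<omega>) \<le> card {..<n}"
      unfolding sign_mismatch_def by (intro card_mono) auto
    then show ?thesis unfolding K_def by simp
  qed
  have pw: "K \<omega> \<le> (\<Sum>i<n. indicator (A i) \<omega>) + real n * (c / e) powr p + real n * indicator B \<omega>"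
    if \<omega>: "\<omega> \<in> space M" for \<omega>
  proof (cases "\<omega> \<in> B")
    case True
    have "0 \<le> (\<Sum>i<n. indicator (A i) \<omega> :: real)" by (intro sum_nonneg) auto
    moreover have "0 \<le> real n * (c / e) powr p" by simp
    moreover have "indicator B \<omega> = (1::real)" using True by simp
    ultimately show ?thesis using Kle[of \<omega>] by (simp only: mult_1_right)
  next
    case False
    have Y0: "Y \<omega> \<ge> 0" using dpos[OF \<omega>] unfolding Y_def by simp
    have "X \<omega> < c * Y \<omega>" using False \<omega> Y0 C' unfolding B_def c_def by (auto simp: abs_mult)
    then have "K \<omega> \<le> real (card {i\<in>{..<n}. - w \<omega> i * sgn (vb \<omega> i) \<ge> (1 - e) * \<bar>vb \<omega> i\<bar>}) + real n * (c / e) powr p"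
      unfolding K_def X_def Y_def using pointwise[OF n p e dpos[OF \<omega>] c0] by simp
    also have "real (card {i\<in>{..<n}. - w \<omega> i * sgn (vb \<omega> i) \<ge> (1 - e) * \<bar>vb \<omega> i\<bar>}) = (\<Sum>i<n. indicator (A i) \<omega>)"
      using \<omega> unfolding A_def by (simp add: indicator_def sum.If_cases Int_def)
    finally show ?thesis using False by simp
  qed
  have "(\<integral>\<omega>. K \<omega> \<partial>M) \<le> (\<integral>\<omega>. (\<Sum>i<n. indicator (A i) \<omega>) + real n * (c / e) powr p + real n * indicator B \<omega> \<partial>M)"
  proof (rule integral_mono)
    show "integrable M K"
      by (rule integrable_const_bound[where B="real n"]) (use Kle in \<open>auto simp: K_def\<close>)
    show "integrable M (\<lambda>\<omega>. (\<Sum>i<n. indicator (A i) \<omega>) + real n * (c / e) powr p + real n * indicator B \<omega>)"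
      by (intro Bochner_Integration.integrable_add Bochner_Integration.integrable_sum integrable_mult_right integrable_real_indicator integrable_const) (auto simp: emeasure_eq_measure)
  qed (use pw in auto)
  also have "\<dots> = (\<Sum>i<n. measure M (A i)) + real n * (c / e) powr p + real n * measure M B"
  proof -
    have I1: "integrable M (\<lambda>\<omega>. (\<Sum>i<n. indicator (A i) \<omega>) :: real)"
      by (intro Bochner_Integration.integrable_sum integrable_real_indicator) (auto simp: emeasure_eq_measure)
    have I2: "integrable M (\<lambda>\<omega>. real n * (c / e) powr p)" by simp
    have I3: "integrable M (\<lambda>\<omega>. real n * indicator B \<omega> :: real)"
      by (intro integrable_mult_right integrable_real_indicator) (auto simp: emeasure_eq_measure)
    have "(\<integral>\<omega>. (\<Sum>i<n. indicator (A i) \<omega>) + real n * (c / e) powr p + real n * indicator B \<omega> \<partial>M)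
      = (\<integral>\<omega>. (\<Sum>i<n. indicator (A i) \<omega>) + real n * (c / e) powr p \<partial>M) + (\<integral>\<omega>. real n * indicator B \<omega> \<partial>M)"
      using I1 I2 I3 by (intro Bochner_Integration.integral_add Bochner_Integration.integrable_add) auto
    also have "(\<integral>\<omega>. (\<Sum>i<n. indicator (A i) \<omega>) + real n * (c / e) powr p \<partial>M)
       = (\<integral>\<omega>. (\<Sum>i<n. indicator (A i) \<omega>) \<partial>M) + (\<integral>\<omega>. real n * (c / e) powr p \<partial>M)"
      using I1 I2 by (intro Bochner_Integration.integral_add) auto
    also have "(\<integral>\<omega>. (\<Sum>i<n. indicator (A i) \<omega> :: real) \<partial>M) = (\<Sum>i<n. (\<integral>\<omega>. indicator (A i) \<omega> \<partial>M))"
      using Am by (intro Bochner_Integration.integral_sum) (simp add: integrable_indicator_iff Int_absorb2 sets.sets_into_space emeasure_eq_measure)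
    also have "\<dots> = (\<Sum>i<n. measure M (A i))"
      using Am by (simp add: Int_absorb2 sets.sets_into_space)
    also have "(\<integral>\<omega>. real n * indicator B \<omega> \<partial>M) = real n * measure M B"
      using Bm by (simp add: Int_absorb2 sets.sets_into_space)
    finally show ?thesis by (simp add: prob_space)
  qed
  finally show ?thesis unfolding K_def A_def B_def c_def X_def Y_def .
qed

theorem lemmaE1:
  fixes M :: "nat \<Rightarrow> 'a measure"
    and v w vb :: "nat \<Rightarrow> 'a \<Rightarrow> nat \<Rightarrow> real"
    and p :: "nat \<Rightarrow> real"
  assumes prob: "\<And>n. prob_space (M n)"
    and meas_v: "\<And>n i. (\<lambda>\<omega>. v n \<omega> i) \<in> borel_measurable (M n)"
    and meas_w: "\<And>n i. (\<lambda>\<omega>. w n \<omega> i) \<in> borel_measurable (M n)"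
    and meas_vb: "\<And>n i. (\<lambda>\<omega>. vb n \<omega> i) \<in> borel_measurable (M n)"
    and delta_pos: "\<And>n \<omega>. n \<ge> 1 \<Longrightarrow> \<omega> \<in> space (M n) \<Longrightarrow>
                       Min ((\<lambda>i. \<bar>vb n \<omega> i\<bar>) ` {..<n}) > 0"
    and p_lim: "filterlim p at_top sequentially"
    and hyp: "smallo_P M
       (\<lambda>n \<omega>. min (lp_norm (p n) n (\<lambda>i. v n \<omega> i - vb n \<omega> i - w n \<omega> i))
                   (lp_norm (p n) n (\<lambda>i. - v n \<omega> i - vb n \<omega> i - w n \<omega> i)))
       (\<lambda>n \<omega>. real n powr (1 / p n) * Min ((\<lambda>i. \<bar>vb n \<omega> i\<bar>) ` {..<n}))
       p"
  shows "limsup (\<lambda>n. ereal (1 / p n) *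
            eln ((1 / real n) * (\<integral>\<omega>. real (min (sign_mismatch n 1 (v n \<omega>) (vb n \<omega>))
                                              (sign_mismatch n (-1) (v n \<omega>) (vb n \<omega>))) \<partial>M n)))
         \<le> Limsup (at_right (0::real)) (\<lambda>\<epsilon>. limsup (\<lambda>n. ereal (1 / p n) *
            eln ((1 / real n) * (\<Sum>i<n. measure (M n)
               {\<omega> \<in> space (M n). - w n \<omega> i * sgn (vb n \<omega> i) \<ge> (1 - \<epsilon>) * \<bar>vb n \<omega> i\<bar>}))))"
proof -
  define X where "X n \<omega> = min (lp_norm (p n) n (\<lambda>i. v n \<omega> i - vb n \<omega> i - w n \<omega> i))
                   (lp_norm (p n) n (\<lambda>i. - v n \<omega> i - vb n \<omega> i - w n \<omega> i))" for n \<omega>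
  define Y where "Y n \<omega> = real n powr (1 / p n) * Min ((\<lambda>i. \<bar>vb n \<omega> i\<bar>) ` {..<n})" for n \<omega>
  define a where "a n = (1 / real n) * (\<integral>\<omega>. real (min (sign_mismatch n 1 (v n \<omega>) (vb n \<omega>))
                                              (sign_mismatch n (-1) (v n \<omega>) (vb n \<omega>))) \<partial>M n)" for n
  define b where "b \<epsilon> n = (1 / real n) * (\<Sum>i<n. measure (M n)
               {\<omega> \<in> space (M n). - w n \<omega> i * sgn (vb n \<omega> i) \<ge> (1 - \<epsilon>) * \<bar>vb n \<omega> i\<bar>})" for \<epsilon> n
  define L where "L = limsup (\<lambda>n. ereal (1 / p n) * eln (a n))"
  define g where "g \<epsilon> = limsup (\<lambda>n. ereal (1 / p n) * eln (b \<epsilon> n))" for \<epsilon>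
  obtain wn where wn0: "wn \<longlonglongrightarrow> 0" and bO: "bigO_P M X (\<lambda>n \<omega>. wn n * Y n \<omega>) p"
    using hyp unfolding smallo_P_def X_def Y_def by blast
  obtain C1 where C1: "C1 > 0" and HC: "\<And>C. C > 0 \<Longrightarrow> \<exists>C'>0. \<exists>N. \<forall>n\<ge>N.
        measure (M n) {\<omega> \<in> space (M n). \<bar>X n \<omega>\<bar> \<ge> C' * \<bar>wn n * Y n \<omega>\<bar>} \<le> C1 * exp (- C * p n)"
    using bO unfolding bigO_P_def by blast
  have key: "L \<le> ereal z" if e: "0 < e" "e < 1" and gz: "g e < ereal z" for e z
  proof -
    have ev1: "eventually (\<lambda>n. ereal (1 / p n) * eln (b e n) < ereal z) sequentially"
      using Limsup_lessD[OF gz[unfolded g_def]] .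
    define C where "C = \<bar>z\<bar> + \<bar>ln C1\<bar> + 1"
    have C0: "C > 0" unfolding C_def by simp
    obtain C' N where C': "C' > 0" and HN: "\<And>n. n \<ge> N \<Longrightarrow>
        measure (M n) {\<omega> \<in> space (M n). \<bar>X n \<omega>\<bar> \<ge> C' * \<bar>wn n * Y n \<omega>\<bar>} \<le> C1 * exp (- C * p n)"
      using HC[OF C0] by blast
    have ev2: "eventually (\<lambda>n. p n \<ge> 1) sequentially"
      using p_lim by (simp add: filterlim_at_top)
    have "(\<lambda>n. C' * \<bar>wn n\<bar>) \<longlonglongrightarrow> 0"
      using wn0 by (intro tendsto_mult_right_zero tendsto_rabs_zero)
    then have ev3: "eventually (\<lambda>n. C' * \<bar>wn n\<bar> < e * exp z) sequentially"
      using e by (intro order_tendstoD(2)) auto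
    have ev4: "eventually (\<lambda>n. n \<ge> max N 1) sequentially" by (rule eventually_ge_at_top)
    have ev: "eventually (\<lambda>n. ereal (1 / p n) * eln (a n) \<le> ereal (ln 3 / p n + z)) sequentially"
      using ev1 ev2 ev3 ev4
    proof eventually_elim
      case (elim n)
      have n1: "n \<ge> 1" and nN: "n \<ge> N" using elim(4) by auto
      have pn: "p n > 0" using elim(2) by simp
      define c where "c = C' * \<bar>wn n\<bar>"
      have c0: "c \<ge> 0" using C' by (simp add: c_def)
      note IS = integral_step[OF prob meas_v meas_w meas_vb n1 pn e(1) C' delta_pos[OF n1], where q = "wn n"]
      have "b e n < exp (z * p n)" using eln_down[OF pn elim(1)] .
      then have S: "(\<Sum>i<n. measure (M n)
               {\<omega> \<in> space (M n). - w n \<omega> i * sgn (vb n \<omega> i) \<ge> (1 - e) * \<bar>vb n \<omega> i\<bar>}) \<le> real n * exp (z * p n)"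
        using n1 unfolding b_def by (simp add: field_simps)
      have "(c / e) powr p n \<le> exp z powr p n"
        using elim(3) c0 e pn unfolding c_def by (intro powr_mono2) (auto simp: field_simps)
      also have "\<dots> = exp (z * p n)" by (simp add: powr_def)
      finally have T: "(c / e) powr p n \<le> exp (z * p n)" .
      have "C1 * exp (- C * p n) = exp (ln C1 - C * p n)" using C1 by (simp add: exp_diff exp_minus field_simps)
      also have "\<dots> \<le> exp (z * p n)"
      proof -
        have "z + C \<ge> \<bar>ln C1\<bar> + 1" unfolding C_def by simp
        then have "(z + C) * p n \<ge> (\<bar>ln C1\<bar> + 1) * 1"
          using elim(2) by (intro mult_mono) auto
        then show ?thesis by (simp add: algebra_simps)
      qed
      finally have U: "C1 * exp (- C * p n) \<le> exp (z * p n)" .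
      have PB: "measure (M n) {\<omega> \<in> space (M n). \<bar>X n \<omega>\<bar> \<ge> C' * \<bar>wn n * Y n \<omega>\<bar>} \<le> exp (z * p n)"
        using HN[OF nN] U by linarith
      have "(\<integral>\<omega>. real (min (sign_mismatch n 1 (v n \<omega>) (vb n \<omega>))
                                              (sign_mismatch n (-1) (v n \<omega>) (vb n \<omega>))) \<partial>M n)
            \<le> real n * exp (z * p n) + real n * exp (z * p n) + real n * exp (z * p n)"
      proof -
        have T': "real n * (c / e) powr p n \<le> real n * exp (z * p n)"
          using T by (intro mult_left_mono) auto
        have PB': "real n * measure (M n) {\<omega> \<in> space (M n). \<bar>X n \<omega>\<bar> \<ge> C' * \<bar>wn n * Y n \<omega>\<bar>} \<le> real n * exp (z * p n)"
          using PB by (intro mult_left_mono) auto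
        have IS': "(\<integral>\<omega>. real (min (sign_mismatch n 1 (v n \<omega>) (vb n \<omega>))
                                              (sign_mismatch n (-1) (v n \<omega>) (vb n \<omega>))) \<partial>M n)
           \<le> (\<Sum>i<n. measure (M n)
               {\<omega> \<in> space (M n). - w n \<omega> i * sgn (vb n \<omega> i) \<ge> (1 - e) * \<bar>vb n \<omega> i\<bar>})
            + real n * (c / e) powr p n
            + real n * measure (M n) {\<omega> \<in> space (M n). \<bar>X n \<omega>\<bar> \<ge> C' * \<bar>wn n * Y n \<omega>\<bar>}"
          using IS unfolding X_def Y_def c_def .
        show ?thesis using IS' S T' PB' by linarith
      qed
      then have "a n \<le> 3 * exp (z * p n)" using n1 unfolding a_def by (simp add: field_simps)
      then show ?case by (rule eln_up[OF pn])
    qed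
    have "L \<le> limsup (\<lambda>n. ereal (ln 3 / p n + z))"
      unfolding L_def by (rule Limsup_mono[OF ev])
    also have "\<dots> = ereal z"
    proof (rule lim_imp_Limsup)
      show "\<not> trivial_limit (sequentially :: nat filter)" by simp
      have "(\<lambda>n. ln 3 / p n) \<longlonglongrightarrow> 0"
        using p_lim by (intro tendsto_divide_0[OF tendsto_const] filterlim_at_top_imp_at_infinity)
      then have "(\<lambda>n. ln 3 / p n + z) \<longlonglongrightarrow> 0 + z" by (intro tendsto_add) auto
      then show "(\<lambda>n. ereal (ln 3 / p n + z)) \<longlonglongrightarrow> ereal z" by (simp add: tendsto_ereal)
    qed
    finally show ?thesis .
  qed
  have Le: "L \<le> g e" if "0 < e" "e < 1" for e
  proof (rule ccontr)
    assume "\<not> L \<le> g e"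
    then have "g e < L" by simp
    then obtain z where z1: "g e < ereal z" and z2: "ereal z < L" using ereal_dense2 by blast
    have "L \<le> ereal z" using key[OF that z1] .
    then show False using z2 by simp
  qed
  have "L \<le> Liminf (at_right (0::real)) g"
  proof (rule Liminf_bounded)
    show "eventually (\<lambda>e. L \<le> g e) (at_right (0::real))"
    proof -
      have "\<exists>b>0. \<forall>y>0. y < b \<longrightarrow> L \<le> g y"
        by (rule exI[of _ 1]) (simp add: Le)
      then show ?thesis using eventually_at_right[OF zero_less_one, of "\<lambda>e. L \<le> g e"] by (rule iffD2[rotated])
    qed
  qed
  also have "\<dots> \<le> Limsup (at_right (0::real)) g"
    by (rule Liminf_le_Limsup) (simp add: trivial_limit_at_right_real)
  finally have "L \<le> Limsup (at_right (0::real)) g" .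
  then show ?thesis unfolding L_def g_def[abs_def] a_def b_def .
qed

end
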